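(* Let $H$ be a complex Hilbert space, $\varphi,\psi:[0,1]\to\mathbb{R}$ continuous, $t\in[0,1]$, and let $(A_n)\subset\mathbb{B}(H)$ and $A\in\mathbb{B}(H)$ satisfy $\|A_n-A\|_t\to0$ as $n\to\infty$. Then $$\omega_t(\varphi,\psi;A)=\lim_{n\to\infty}\omega_t(\varphi,\psi;A_n)\quad\text{and}\quad c_t(\varphi,\psi;A)=\lim_{n\to\infty}c_t(\varphi,\psi;A_n).$$
   Context: $S_1(H)$ is the unit sphere of $H$. For $B\in\mathbb{B}(H)$: $\|B\|_t=\|\varphi(t)B+\psi(t)B^*\|$ (operator norm), $\omega_t(\varphi,\psi;B)=\sup_{x\in S_1(H)}|\langle(\varphi(t)B+\psi(t)B^* )x,x\rangle|$, $c_t(\varphi,\psi;B)=\inf_{x\in S_1(H)}|\langle(\varphi(t)B+\psi(t)B^* )x,x\rangle|$. *)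

theory Defs
  imports "HOL-Analysis.Analysis"
begin

class complex_inner = real_normed_vector +
  fixes scaleC :: "complex \<Rightarrow> 'a \<Rightarrow> 'a"
    and cinner :: "'a \<Rightarrow> 'a \<Rightarrow> complex"
  assumes scaleC_add_right: "scaleC a (x + y) = scaleC a x + scaleC a y"
    and scaleC_add_left: "scaleC (a + b) x = scaleC a x + scaleC b x"
    and scaleC_scaleC: "scaleC a (scaleC b x) = scaleC (a * b) x"
    and scaleC_one: "scaleC 1 x = x"
    and scaleR_scaleC: "scaleR r x = scaleC (complex_of_real r) x"
    and cinner_commute: "cinner x y = cnj (cinner y x)"
    and cinner_add_left: "cinner (x + y) z = cinner x z + cinner y z"
    and cinner_scaleC_left: "cinner (scaleC a x) y = a * cinner x y"
    and cinner_self_real: "Im (cinner x x) = 0"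
    and cinner_self_nonneg: "0 \<le> Re (cinner x x)"
    and cinner_self_eq_zero: "cinner x x = 0 \<longleftrightarrow> x = 0"
    and norm_eq_sqrt_cinner: "norm x = sqrt (Re (cinner x x))"

class chilbert_space = complex_inner + complete_space

definition bounded_clinear :: "('a::complex_inner \<Rightarrow> 'b::complex_inner) \<Rightarrow> bool" where
  "bounded_clinear f \<longleftrightarrow>
     (\<forall>x y. f (x + y) = f x + f y) \<and> (\<forall>c x. f (scaleC c x) = scaleC c (f x)) \<and>
     (\<exists>K. \<forall>x. norm (f x) \<le> norm x * K)"

definition adjoint :: "('a::chilbert_space \<Rightarrow> 'a) \<Rightarrow> ('a \<Rightarrow> 'a)" where
  "adjoint B = (THE Bs. \<forall>x y. cinner (B x) y = cinner x (Bs y))"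

definition op_t :: "(real \<Rightarrow> real) \<Rightarrow> (real \<Rightarrow> real) \<Rightarrow> real \<Rightarrow> ('a::chilbert_space \<Rightarrow> 'a) \<Rightarrow> 'a \<Rightarrow> 'a" where
  "op_t \<phi> \<psi> t B = (\<lambda>x. \<phi> t *\<^sub>R B x + \<psi> t *\<^sub>R adjoint B x)"

definition tnorm :: "(real \<Rightarrow> real) \<Rightarrow> (real \<Rightarrow> real) \<Rightarrow> real \<Rightarrow> ('a::chilbert_space \<Rightarrow> 'a) \<Rightarrow> real" where
  "tnorm \<phi> \<psi> t B = onorm (op_t \<phi> \<psi> t B)"

definition omega_t :: "(real \<Rightarrow> real) \<Rightarrow> (real \<Rightarrow> real) \<Rightarrow> real \<Rightarrow> ('a::chilbert_space \<Rightarrow> 'a) \<Rightarrow> real" where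
  "omega_t \<phi> \<psi> t B = (SUP x\<in>{x. norm x = 1}. cmod (cinner (op_t \<phi> \<psi> t B x) x))"

definition c_t :: "(real \<Rightarrow> real) \<Rightarrow> (real \<Rightarrow> real) \<Rightarrow> real \<Rightarrow> ('a::chilbert_space \<Rightarrow> 'a) \<Rightarrow> real" where
  "c_t \<phi> \<psi> t B = (INF x\<in>{x. norm x = 1}. cmod (cinner (op_t \<phi> \<psi> t B x) x))"

end

theory Submission
  imports Defs
begin

lemma cinner_zero_left[simp]: "cinner 0 y = 0"
  using cinner_add_left[of 0 0 y] by simp
lemma cinner_zero_right[simp]: "cinner x 0 = 0"
  by (metis cinner_commute cinner_zero_left complex_cnj_zero)
lemma cinner_add_right: "cinner x (y + z) = cinner x y + cinner x z"
  by (metis cinner_commute cinner_add_left complex_cnj_add)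
lemma cinner_minus_left: "cinner (- x) y = - cinner x y"
proof -
  have "cinner x y + cinner (-x) y = 0" using cinner_add_left[of x "-x" y] by simp
  then show ?thesis by (metis add_eq_0_iff)
qed
lemma cinner_diff_left: "cinner (x - y) z = cinner x z - cinner y z"
  using cinner_add_left[of x "-y" z] cinner_minus_left[of y z] by simp
lemma cinner_diff_right: "cinner x (y - z) = cinner x y - cinner x z"
  by (metis cinner_commute cinner_diff_left complex_cnj_diff)
lemma cinner_scaleC_right: "cinner x (scaleC a y) = cnj a * cinner x y"
  by (metis cinner_commute cinner_scaleC_left complex_cnj_mult)
lemma cinner_scaleR_left: "cinner (r *\<^sub>R x) y = of_real r * cinner x y"
  by (simp add: scaleR_scaleC cinner_scaleC_left)
lemma cinner_scaleR_right: "cinner x (r *\<^sub>R y) = of_real r * cinner x y"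
  by (simp add: scaleR_scaleC cinner_scaleC_right)
lemma cinner_self: "cinner x x = complex_of_real ((norm x)^2)"
  by (simp add: complex_eq_iff norm_eq_sqrt_cinner cinner_self_real cinner_self_nonneg)
lemma norm_scaleC: "norm (scaleC c x) = cmod c * norm x"
proof -
  have "complex_of_real ((norm (scaleC c x))^2) = cinner (scaleC c x) (scaleC c x)"
    by (simp only: cinner_self)
  also have "\<dots> = (c * cnj c) * cinner x x"
    by (simp add: cinner_scaleC_left cinner_scaleC_right mult.assoc)
  also have "\<dots> = complex_of_real ((cmod c)^2) * complex_of_real ((norm x)^2)"
    by (simp only: complex_norm_square cinner_self)
  also have "\<dots> = complex_of_real ((cmod c * norm x)^2)"
    by (simp add: power_mult_distrib)
  finally have "(norm (scaleC c x))^2 = (cmod c * norm x)^2" by (simp only: of_real_eq_iff)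
  then show ?thesis by (simp add: power2_eq_iff_nonneg)
qed
lemma cinner_ext: "(\<And>x. cinner x a = cinner x b) \<Longrightarrow> a = b"
proof -
  assume h: "\<And>x. cinner x a = cinner x b"
  have "cinner (a - b) (a - b) = 0" using h[of "a-b"] by (simp add: cinner_diff_right)
  then show "a = b" by (metis cinner_self_eq_zero eq_iff_diff_eq_0)
qed
lemma expand_sq:
  "Re (cinner (x - scaleC a y) (x - scaleC a y)) =
     (norm x)^2 - 2 * Re (cnj a * cinner x y) + (cmod a)^2 * (norm y)^2"
proof -
  have "cinner (x - scaleC a y) (x - scaleC a y) =
     cinner x x - cnj a * cinner x y - a * cinner y x + a * cnj a * cinner y y"
    by (simp add: cinner_diff_left cinner_diff_right cinner_scaleC_left cinner_scaleC_right algebra_simps)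
  also have "a * cinner y x = cnj (cnj a * cinner x y)"
    by (metis cinner_commute complex_cnj_cnj complex_cnj_mult)
  finally show ?thesis
    by (simp add: cinner_self complex_norm_square[symmetric] mult.commute)
qed
lemma cauchy_schwarz: "cmod (cinner x y) \<le> norm x * norm y"
proof (cases "y = 0")
  case True then show ?thesis by simp
next
  case False
  define s where "s = (norm y)^2"
  have s: "s > 0" using False by (simp add: s_def)
  define c where "c = cinner x y"
  define a where "a = c / complex_of_real s"
  have e: "cnj a * c = complex_of_real ((cmod c)^2 / s)"
  proof -
    have "cnj a * c = (c * cnj c) / complex_of_real s" by (simp add: a_def)
    also have "\<dots> = complex_of_real ((cmod c)^2 / s)" by (simp only: complex_norm_square[symmetric] of_real_divide)
    finally show ?thesis .
  qed
  have "(cmod a)^2 * s = (cmod c)^2 / s"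
    using s by (simp add: a_def norm_divide power_divide power2_eq_square)
  moreover have "0 \<le> (norm x)^2 - 2 * Re (cnj a * c) + (cmod a)^2 * s"
    using cinner_self_nonneg[of "x - scaleC a y"] expand_sq[of x a y]
    unfolding c_def s_def by linarith
  moreover have "Re (cnj a * c) = (cmod c)^2 / s" using e by simp
  ultimately have "0 \<le> (norm x)^2 - (cmod c)^2 / s" by linarith
  then have "(cmod c)^2 \<le> (norm x)^2 * s" using s by (simp add: field_simps)
  then have "(cmod c)^2 \<le> (norm x * norm y)^2" by (simp add: s_def power_mult_distrib)
  then show ?thesis unfolding c_def by (simp add: power2_le_iff_abs_le)
qed
lemma proj_coeff:
  assumes s: "s > 0" and a: "a = c / complex_of_real s"
  shows "Re (cnj a * c) = (cmod c)^2 / s" and "(cmod a)^2 * s = (cmod c)^2 / s"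
proof -
  have "cnj a * c = (c * cnj c) / complex_of_real s" by (simp add: a)
  also have "\<dots> = complex_of_real ((cmod c)^2 / s)"
    by (simp only: complex_norm_square[symmetric] of_real_divide)
  finally show "Re (cnj a * c) = (cmod c)^2 / s" by simp
  show "(cmod a)^2 * s = (cmod c)^2 / s"
    using s by (simp add: a norm_divide power_divide power2_eq_square)
qed

lemma parallelogram:
  fixes x y :: "'a::complex_inner"
  shows "(norm (x + y))^2 + (norm (x - y))^2 = 2 * (norm x)^2 + 2 * (norm y)^2"
proof -
  have "cinner (x+y) (x+y) + cinner (x-y) (x-y) = 2 * cinner x x + 2 * cinner y y"
    by (simp add: cinner_add_left cinner_add_right cinner_diff_left cinner_diff_right algebra_simps)
  from arg_cong[where f=Re, OF this] show ?thesis by (simp add: cinner_self)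
qed

lemma norm_sq_Re: "(norm x)^2 = Re (cinner x x)"
  by (simp add: cinner_self)

lemma riesz:
  fixes f :: "'a::chilbert_space \<Rightarrow> complex"
  assumes add: "\<And>x y. f (x + y) = f x + f y" and sc: "\<And>c x. f (scaleC c x) = c * f x"
    and bd: "\<And>x. cmod (f x) \<le> norm x * K"
  shows "\<exists>w. \<forall>x. f x = cinner x w"
proof (cases "\<forall>x. f x = 0")
  case True then show ?thesis by (intro exI[of _ 0]) simp
next
  case False
  have f0: "f 0 = 0" using add[of 0 0] by simp
  have fdiff: "f (x - y) = f x - f y" for x y using add[of "x - y" y] by simp
  have fR: "f (r *\<^sub>R x) = complex_of_real r * f x" for r x by (simp add: scaleR_scaleC sc)
  obtain u0 where u0: "f u0 \<noteq> 0" using False by blast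
  define u where "u = scaleC (1 / f u0) u0"
  have fu: "f u = 1" using u0 by (simp add: u_def sc)
  define N where "N = {n. f n = 0}"
  define D where "D = (\<lambda>n. (norm (u - n))^2)"
  define d where "d = Inf (D ` N)"
  have N0: "0 \<in> N" using f0 by (simp add: N_def)
  have bdd: "bdd_below (D ` N)" by (rule bdd_belowI[of _ 0]) (auto simp: D_def)
  have dle: "d \<le> D n" if "n \<in> N" for n
    unfolding d_def using bdd that by (simp add: cInf_lower)
  have "\<exists>n\<in>N. D n < d + inverse (real (Suc k))" for k
  proof -
    have "Inf (D ` N) < d + inverse (real (Suc k))" by (simp add: d_def)
    from cInf_lessD[OF _ this] N0 show ?thesis by blast
  qed
  then obtain ns where ns: "\<And>k. ns k \<in> N" "\<And>k. D (ns k) < d + inverse (real (Suc k))"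
    by metis
  have Nmid: "(1/2::real) *\<^sub>R (a + b) \<in> N" if "a \<in> N" "b \<in> N" for a b
    using that by (simp add: N_def fR add)
  have close: "(norm (ns j - ns k))^2 \<le> 2 * inverse (real (Suc j)) + 2 * inverse (real (Suc k))" for j k
  proof -
    define m where "m = (1/2::real) *\<^sub>R (ns j + ns k)"
    have "m \<in> N" unfolding m_def using ns(1) Nmid by blast
    then have "d \<le> D m" by (rule dle)
    have eq: "(u - ns j) + (u - ns k) = 2 *\<^sub>R (u - m)"
      by (simp add: m_def algebra_simps scaleR_2)
    have "(norm ((u - ns j) + (u - ns k)))^2 = 4 * D m"
      unfolding eq D_def by (simp add: power_mult_distrib)
    moreover have "(norm ((u - ns j) - (u - ns k)))^2 = (norm (ns j - ns k))^2"
      using norm_minus_commute[of "ns k" "ns j"] by simp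
    moreover note parallelogram[of "u - ns j" "u - ns k"]
    ultimately have "(norm (ns j - ns k))^2 = 2 * D (ns j) + 2 * D (ns k) - 4 * D m"
      unfolding D_def by linarith
    then show ?thesis using ns(2)[of j] ns(2)[of k] \<open>d \<le> D m\<close> by linarith
  qed
  have "Cauchy ns"
  proof (rule CauchyI)
    fix e :: real assume e: "0 < e"
    obtain M :: nat where M: "4 / e^2 < real M" using reals_Archimedean2 by blast
    have "4 < e^2 * real M" using M e by (simp add: field_simps)
    moreover have "e^2 * real M \<le> e^2 * real (Suc M)" by (intro mult_left_mono) auto
    ultimately have "4 < e^2 * real (Suc M)" by linarith
    then have M': "4 * inverse (real (Suc M)) < e^2"
      by (simp add: field_simps)
    show "\<exists>M. \<forall>m\<ge>M. \<forall>n\<ge>M. norm (ns m - ns n) < e"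
    proof (intro exI allI impI)
      fix m n assume mn: "M \<le> m" "M \<le> n"
      have "inverse (real (Suc m)) \<le> inverse (real (Suc M))"
        using mn by (simp add: le_imp_inverse_le)
      moreover have "inverse (real (Suc n)) \<le> inverse (real (Suc M))"
        using mn by (simp add: le_imp_inverse_le)
      ultimately have "(norm (ns m - ns n))^2 < e^2" using close[of m n] M' by linarith
      then show "norm (ns m - ns n) < e" using e by (simp add: power_less_imp_less_base)
    qed
  qed
  then obtain n0 where lim: "ns \<longlonglongrightarrow> n0" using Cauchy_convergent convergent_def by blast
  have "(\<lambda>k. f (ns k) - f n0) \<longlonglongrightarrow> 0"
  proof (rule Lim_null_comparison)
    show "\<forall>\<^sub>F k in sequentially. norm (f (ns k) - f n0) \<le> norm (ns k - n0) * K"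
      using bd by (simp add: fdiff[symmetric])
    show "(\<lambda>k. norm (ns k - n0) * K) \<longlonglongrightarrow> 0"
      by (intro tendsto_mult_left_zero tendsto_norm_zero LIM_zero lim)
  qed
  moreover have "f (ns k) = 0" for k using ns(1) by (simp add: N_def)
  ultimately have "f n0 = 0" by (simp add: LIMSEQ_const_iff)
  then have n0N: "n0 \<in> N" by (simp add: N_def)
  have "D n0 \<le> d"
  proof (rule LIMSEQ_le)
    show "(\<lambda>k. D (ns k)) \<longlonglongrightarrow> D n0" unfolding D_def by (intro tendsto_intros lim)
    show "(\<lambda>k. d + inverse (real (Suc k))) \<longlonglongrightarrow> d"
      using tendsto_add[OF tendsto_const LIMSEQ_inverse_real_of_nat, of d] by simp
    show "\<exists>N. \<forall>n\<ge>N. D (ns n) \<le> d + inverse (real (Suc n))" using ns(2) less_imp_le by blast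
  qed
  define z where "z = u - n0"
  have fz: "f z = 1" using fu \<open>f n0 = 0\<close> by (simp add: z_def fdiff)
  have z0: "z \<noteq> 0" using fz f0 by auto
  have orth: "cinner z n = 0" if nN: "n \<in> N" for n
  proof (cases "n = 0")
    case True then show ?thesis by simp
  next
    case False
    define s where "s = (norm n)^2"
    have s: "s > 0" using False by (simp add: s_def)
    define c where "c = cinner z n"
    define a where "a = c / complex_of_real s"
    have "n0 + scaleC a n \<in> N" using n0N nN by (simp add: N_def add sc)
    then have "d \<le> D (n0 + scaleC a n)" by (rule dle)
    moreover have eqz: "u - (n0 + scaleC a n) = z - scaleC a n" by (simp add: z_def)
    ultimately have "(norm z)^2 \<le> (norm (z - scaleC a n))^2"
      using \<open>D n0 \<le> d\<close> unfolding D_def eqz z_def[symmetric] by linarith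
    also have "\<dots> = (norm z)^2 - 2 * Re (cnj a * c) + (cmod a)^2 * s"
      unfolding norm_sq_Re expand_sq c_def s_def by (simp add: norm_sq_Re)
    finally have "(cmod c)^2 / s \<le> 0"
      using proj_coeff[OF s a_def] by linarith
    then have "(cmod c)^2 \<le> 0" using s by (simp add: divide_le_0_iff)
    then show ?thesis unfolding c_def by simp
  qed
  define w where "w = scaleC (complex_of_real (1 / (norm z)^2)) z"
  show ?thesis
  proof (intro exI allI)
    fix x
    have "f (x - scaleC (f x) z) = 0" by (simp add: fdiff sc fz)
    then have "cinner z (x - scaleC (f x) z) = 0" using orth by (simp add: N_def)
    then have "cinner (x - scaleC (f x) z) z = 0" by (metis cinner_commute complex_cnj_zero)
    then have "cinner x z = f x * complex_of_real ((norm z)^2)"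
      by (simp add: cinner_diff_left cinner_scaleC_left cinner_self)
    then show "f x = cinner x w" using z0
      by (simp add: w_def cinner_scaleC_right)
  qed
qed
lemma bclinD:
  fixes B :: "'a::complex_inner \<Rightarrow> 'b::complex_inner" and x y :: 'a
  assumes "bounded_clinear B"
  shows "B (x + y) = B x + B y" "B (scaleC c x) = scaleC c (B x)"
    "\<exists>K\<ge>0. \<forall>x. norm (B x) \<le> norm x * K"
proof -
  show "B (x + y) = B x + B y" "B (scaleC c x) = scaleC c (B x)"
    using assms unfolding bounded_clinear_def by auto
  obtain K where K: "\<forall>x. norm (B x) \<le> norm x * K" using assms unfolding bounded_clinear_def by auto
  have "\<forall>x. norm (B x) \<le> norm x * max K 0"
  proof
    fix z :: 'a
    have "norm z * K \<le> norm z * max K 0" by (intro mult_left_mono) auto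
    then show "norm (B z) \<le> norm z * max K 0" using K by (meson order_trans)
  qed
  then show "\<exists>K\<ge>0. \<forall>x. norm (B x) \<le> norm x * K" by (intro exI[of _ "max K 0"]) auto
qed

lemma adjoint_eqI:
  assumes "\<And>x y. cinner (B x) y = cinner x (G y)"
  shows "adjoint B = G"
  unfolding adjoint_def
proof (rule the_equality)
  show "\<forall>x y. cinner (B x) y = cinner x (G y)" using assms by blast
  fix Bs assume h: "\<forall>x y. cinner (B x) y = cinner x (Bs y)"
  show "Bs = G"
  proof
    fix y show "Bs y = G y" by (rule cinner_ext) (metis h assms)
  qed
qed

lemma adjoint_exists:
  fixes B :: "'a::chilbert_space \<Rightarrow> 'a"
  assumes B: "bounded_clinear B"
  shows "\<exists>G. \<forall>x y. cinner (B x) y = cinner x (G y)"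
proof -
  obtain K where K: "K \<ge> 0" "\<And>x. norm (B x) \<le> norm x * K" using bclinD(3)[OF B] by blast
  have "\<forall>y. \<exists>w. \<forall>x. cinner (B x) y = cinner x w"
  proof
    fix y
    show "\<exists>w. \<forall>x. cinner (B x) y = cinner x w"
    proof (rule riesz)
      show "cinner (B (x + z)) y = cinner (B x) y + cinner (B z) y" for x z
        by (simp add: bclinD[OF B] cinner_add_left)
      show "cinner (B (scaleC c x)) y = c * cinner (B x) y" for c x
        by (simp add: bclinD[OF B] cinner_scaleC_left)
      show "cmod (cinner (B x) y) \<le> norm x * (K * norm y)" for x
      proof -
        have "cmod (cinner (B x) y) \<le> norm (B x) * norm y" by (rule cauchy_schwarz)
        also have "\<dots> \<le> norm x * K * norm y" using K(2)[of x] by (intro mult_right_mono) auto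
        finally show ?thesis by (simp add: mult.assoc)
      qed
    qed
  qed
  then show ?thesis by metis
qed

lemma adjoint_char:
  fixes B :: "'a::chilbert_space \<Rightarrow> 'a"
  assumes B: "bounded_clinear B"
  shows "cinner (B x) y = cinner x (adjoint B y)"
proof -
  obtain G where G: "\<And>x y. cinner (B x) y = cinner x (G y)" using adjoint_exists[OF B] by blast
  then show ?thesis using adjoint_eqI[of B G] by simp
qed

lemma adjoint_diff:
  fixes A B :: "'a::chilbert_space \<Rightarrow> 'a"
  assumes A: "bounded_clinear A" and B: "bounded_clinear B"
  shows "adjoint (\<lambda>x. A x - B x) = (\<lambda>y. adjoint A y - adjoint B y)"
  by (rule adjoint_eqI) (simp add: cinner_diff_left cinner_diff_right adjoint_char[OF A] adjoint_char[OF B])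

lemma bclin_linear:
  assumes B: "bounded_clinear B"
  shows "bounded_linear B"
proof -
  obtain K where K: "K \<ge> 0" "\<And>x. norm (B x) \<le> norm x * K" using bclinD(3)[OF B] by blast
  show ?thesis
    by (rule bounded_linear_intro[of _ K]) (simp_all add: bclinD[OF B] scaleR_scaleC K)
qed

lemma adjoint_linear:
  fixes B :: "'a::chilbert_space \<Rightarrow> 'a"
  assumes B: "bounded_clinear B"
  shows "bounded_linear (adjoint B)"
proof -
  obtain K where K: "K \<ge> 0" "\<And>x. norm (B x) \<le> norm x * K" using bclinD(3)[OF B] by blast
  show ?thesis
  proof (rule bounded_linear_intro[of _ K])
    show "adjoint B (a + b) = adjoint B a + adjoint B b" for a b
      by (rule cinner_ext) (simp add: adjoint_char[OF B, symmetric] cinner_add_right)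
    show "adjoint B (r *\<^sub>R a) = r *\<^sub>R adjoint B a" for r a
      by (rule cinner_ext) (simp add: adjoint_char[OF B, symmetric] cinner_scaleR_right)
    show "norm (adjoint B y) \<le> norm y * K" for y
    proof -
      define v where "v = adjoint B y"
      have "(norm v)^2 = Re (cinner (B v) y)" by (simp add: norm_sq_Re adjoint_char[OF B] v_def)
      also have "\<dots> \<le> cmod (cinner (B v) y)" by (rule complex_Re_le_cmod)
      also have "\<dots> \<le> norm (B v) * norm y" by (rule cauchy_schwarz)
      also have "\<dots> \<le> norm v * K * norm y" using K(2)[of v] by (intro mult_right_mono) auto
      finally have h: "norm v * norm v \<le> norm v * (norm y * K)" by (simp add: power2_eq_square algebra_simps)
      show ?thesis
      proof (cases "norm v = 0")
        case True then show ?thesis using K by (simp add: v_def)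
      next
        case False then show ?thesis using h by (simp add: v_def)
      qed
    qed
  qed
qed

lemma op_t_linear:
  fixes B :: "'a::chilbert_space \<Rightarrow> 'a"
  assumes B: "bounded_clinear B"
  shows "bounded_linear (op_t \<phi> \<psi> t B)"
  unfolding op_t_def
  by (intro bounded_linear_add bounded_linear_compose[OF bounded_linear_scaleR_right]
      bclin_linear[OF B] adjoint_linear[OF B])

lemma scaleC_diff_right: "scaleC c (a - b) = scaleC c a - scaleC c (b::'a::complex_inner)"
  using scaleC_add_right[of c "a - b" b] by (simp add: eq_diff_eq)

lemma bclin_diff:
  fixes A B :: "'a::complex_inner \<Rightarrow> 'b::complex_inner"
  assumes A: "bounded_clinear A" and B: "bounded_clinear B"
  shows "bounded_clinear (\<lambda>x. A x - B x)"
proof -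
  obtain K1 where K1: "\<And>x. norm (A x) \<le> norm x * K1" using bclinD(3)[OF A] by blast
  obtain K2 where K2: "\<And>x. norm (B x) \<le> norm x * K2" using bclinD(3)[OF B] by blast
  have "norm (A x - B x) \<le> norm x * (K1 + K2)" for x
    using norm_triangle_ineq4[of "A x" "B x"] K1[of x] K2[of x] by (simp add: algebra_simps)
  then show ?thesis unfolding bounded_clinear_def
    by (auto simp: bclinD[OF A] bclinD[OF B] scaleC_diff_right)
qed

lemma op_t_diff:
  fixes A B :: "'a::chilbert_space \<Rightarrow> 'a"
  assumes A: "bounded_clinear A" and B: "bounded_clinear B"
  shows "op_t \<phi> \<psi> t (\<lambda>x. A x - B x) x = op_t \<phi> \<psi> t A x - op_t \<phi> \<psi> t B x"
  unfolding op_t_def adjoint_diff[OF A B] by (simp add: algebra_simps)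

lemma quad_bound:
  assumes T: "bounded_linear T" and x: "norm x = 1"
  shows "cmod (cinner (T x) x) \<le> onorm T"
proof -
  have "cmod (cinner (T x) x) \<le> norm (T x) * norm x" by (rule cauchy_schwarz)
  also have "\<dots> \<le> onorm T" using onorm[OF T, of x] x by simp
  finally show ?thesis .
qed

lemma sup_approx:
  fixes f g :: "'b \<Rightarrow> real"
  assumes S: "S \<noteq> {}" and bf: "\<And>x. x \<in> S \<Longrightarrow> f x \<le> M" and bg: "\<And>x. x \<in> S \<Longrightarrow> g x \<le> M"
    and d: "\<And>x. x \<in> S \<Longrightarrow> \<bar>f x - g x\<bar> \<le> e"
  shows "\<bar>(SUP x\<in>S. f x) - (SUP x\<in>S. g x)\<bar> \<le> e"
proof -
  have bdf: "bdd_above (f ` S)" by (rule bdd_aboveI2[OF bf])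
  have bdg: "bdd_above (g ` S)" by (rule bdd_aboveI2[OF bg])
  have "(SUP x\<in>S. f x) \<le> (SUP x\<in>S. g x) + e"
  proof (rule cSUP_least[OF S])
    fix x assume x: "x \<in> S"
    have "g x \<le> (SUP x\<in>S. g x)" using bdg x by (rule cSUP_upper2) simp
    then show "f x \<le> (SUP x\<in>S. g x) + e" using d[OF x] by linarith
  qed
  moreover have "(SUP x\<in>S. g x) \<le> (SUP x\<in>S. f x) + e"
  proof (rule cSUP_least[OF S])
    fix x assume x: "x \<in> S"
    have "f x \<le> (SUP x\<in>S. f x)" using bdf x by (rule cSUP_upper2) simp
    then show "g x \<le> (SUP x\<in>S. f x) + e" using d[OF x] by linarith
  qed
  ultimately show ?thesis by linarith
qed

lemma inf_approx:
  fixes f g :: "'b \<Rightarrow> real"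
  assumes S: "S \<noteq> {}" and bf: "\<And>x. x \<in> S \<Longrightarrow> M \<le> f x" and bg: "\<And>x. x \<in> S \<Longrightarrow> M \<le> g x"
    and d: "\<And>x. x \<in> S \<Longrightarrow> \<bar>f x - g x\<bar> \<le> e"
  shows "\<bar>(INF x\<in>S. f x) - (INF x\<in>S. g x)\<bar> \<le> e"
proof -
  have bdf: "bdd_below (f ` S)" by (rule bdd_belowI2[OF bf])
  have bdg: "bdd_below (g ` S)" by (rule bdd_belowI2[OF bg])
  have "(INF x\<in>S. g x) - e \<le> (INF x\<in>S. f x)"
  proof (rule cINF_greatest[OF S])
    fix x assume x: "x \<in> S"
    have "(INF x\<in>S. g x) \<le> g x" using bdg x by (rule cINF_lower2) simp
    then show "(INF x\<in>S. g x) - e \<le> f x" using d[OF x] by linarith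
  qed
  moreover have "(INF x\<in>S. f x) - e \<le> (INF x\<in>S. g x)"
  proof (rule cINF_greatest[OF S])
    fix x assume x: "x \<in> S"
    have "(INF x\<in>S. f x) \<le> f x" using bdf x by (rule cINF_lower2) simp
    then show "(INF x\<in>S. f x) - e \<le> g x" using d[OF x] by linarith
  qed
  ultimately show ?thesis by linarith
qed
theorem theorem2p5:
  fixes \<phi> \<psi> :: "real \<Rightarrow> real" and t :: real
    and A :: "'a::chilbert_space \<Rightarrow> 'a" and An :: "nat \<Rightarrow> 'a \<Rightarrow> 'a"
  assumes "continuous_on {0..1} \<phi>" and "continuous_on {0..1} \<psi>"
    and "t \<in> {0..1}"
    and "bounded_clinear A" and "\<And>n. bounded_clinear (An n)"
    and "(\<lambda>n. tnorm \<phi> \<psi> t (\<lambda>x. An n x - A x)) \<longlonglongrightarrow> 0"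
  shows "(\<lambda>n. omega_t \<phi> \<psi> t (An n)) \<longlonglongrightarrow> omega_t \<phi> \<psi> t A \<and>
         (\<lambda>n. c_t \<phi> \<psi> t (An n)) \<longlonglongrightarrow> c_t \<phi> \<psi> t A"
proof -
  note A = assms(4) and An = assms(5) and lim = assms(6)
  define S :: "'a set" where "S = {x. norm x = 1}"
  define e where "e = (\<lambda>n. tnorm \<phi> \<psi> t (\<lambda>x. An n x - A x))"
  define F :: "('a \<Rightarrow> 'a) \<Rightarrow> 'a \<Rightarrow> real" where "F = (\<lambda>B x. cmod (cinner (op_t \<phi> \<psi> t B x) x))"
  have om: "omega_t \<phi> \<psi> t B = (SUP x\<in>S. F B x)" for B
    by (simp add: omega_t_def S_def F_def)
  have ct: "c_t \<phi> \<psi> t B = (INF x\<in>S. F B x)" for B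
    by (simp add: c_t_def S_def F_def)
  show ?thesis
  proof (cases "S = {}")
    case True then show ?thesis by (simp add: om ct)
  next
    case False
    have diff: "\<bar>F (An n) x - F A x\<bar> \<le> e n" if x: "x \<in> S" for n x
    proof -
      have lin: "bounded_linear (op_t \<phi> \<psi> t (\<lambda>x. An n x - A x))"
        by (rule op_t_linear[OF bclin_diff[OF An A]])
      have "\<bar>F (An n) x - F A x\<bar> \<le> cmod (cinner (op_t \<phi> \<psi> t (An n) x) x - cinner (op_t \<phi> \<psi> t A x) x)"
        unfolding F_def by (rule norm_triangle_ineq3)
      also have "\<dots> = cmod (cinner (op_t \<phi> \<psi> t (\<lambda>x. An n x - A x) x) x)"
        by (simp add: op_t_diff[OF An A] cinner_diff_left)
      also have "\<dots> \<le> e n" unfolding e_def tnorm_def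
        using quad_bound[OF lin] x by (simp add: S_def)
      finally show ?thesis .
    qed
    have bnd: "F B x \<le> onorm (op_t \<phi> \<psi> t B)" if "bounded_clinear B" "x \<in> S" for B x
      using quad_bound[OF op_t_linear[OF that(1)]] that(2) by (simp add: F_def S_def)
    have ge0: "0 \<le> F B x" for B x by (simp add: F_def)
    have e0: "e \<longlonglongrightarrow> 0" using lim by (simp add: e_def)
    have "(\<lambda>n. omega_t \<phi> \<psi> t (An n) - omega_t \<phi> \<psi> t A) \<longlonglongrightarrow> 0"
    proof (rule Lim_null_comparison[OF _ e0])
      show "\<forall>\<^sub>F n in sequentially. norm (omega_t \<phi> \<psi> t (An n) - omega_t \<phi> \<psi> t A) \<le> e n"
      proof (intro always_eventually allI)
        fix n
        show "norm (omega_t \<phi> \<psi> t (An n) - omega_t \<phi> \<psi> t A) \<le> e n"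
          unfolding om real_norm_def
          by (rule sup_approx[OF False, of _ "max (onorm (op_t \<phi> \<psi> t (An n))) (onorm (op_t \<phi> \<psi> t A))"])
            (use bnd[OF An[of n]] bnd[OF A] diff in \<open>fastforce intro: max.coboundedI1 max.coboundedI2\<close>)+
      qed
    qed
    moreover have "(\<lambda>n. c_t \<phi> \<psi> t (An n) - c_t \<phi> \<psi> t A) \<longlonglongrightarrow> 0"
    proof (rule Lim_null_comparison[OF _ e0])
      show "\<forall>\<^sub>F n in sequentially. norm (c_t \<phi> \<psi> t (An n) - c_t \<phi> \<psi> t A) \<le> e n"
      proof (intro always_eventually allI)
        fix n
        show "norm (c_t \<phi> \<psi> t (An n) - c_t \<phi> \<psi> t A) \<le> e n"
          unfolding ct real_norm_def
          by (rule inf_approx[OF False, of 0]) (use ge0 diff in auto)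
      qed
    qed
    ultimately show ?thesis by (simp add: LIM_zero_cancel)
  qed
qed
end
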